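(* Let $\mathcal{P}_s=\{(M,A,U)\in\mathbb{R}^3_+:\gamma M=A\}$, $\mathbb{M}_a=\{\gamma M>A\}$, $\mathbb{M}_s=\{\gamma M<A\}$ (subsets of $\mathbb{R}^3_+$). (i) If $\mathcal{N}_F>1$, then $\mathbf{E}_1^*\in\mathcal{P}_s$ iff $\mathcal{N}_M=\mathcal{N}_F$, $\mathbf{E}_1^*\in\mathbb{M}_a$ iff $\mathcal{N}_M>\mathcal{N}_F$, and $\mathbf{E}_1^*\in\mathbb{M}_s$ iff $\mathcal{N}_M<\mathcal{N}_F$. (ii) If $\mathcal{N}_M>1$ and $\theta_M>1$, then $\mathbf{E}_2^*\in\mathcal{P}_s$ iff $\mathcal{N}_M=\mathcal{N}_F$, $\mathbf{E}_2^*\in\mathbb{M}_s$ iff $\mathcal{N}_F>\mathcal{N}_M$, and $\mathbf{E}_2^*\in\mathbb{M}_a$ iff $\mathcal{N}_M>\mathcal{N}_F$. (iii) If $\mathcal{N}_M=\mathcal{N}_F>1$, then $\mathbf{E}_1^*=\mathbf{E}_2^*\in\mathcal{P}_s$. Consequently $\mathbf{E}_1^*$ is a regular equilibrium of the piecewise smooth natural system when $\mathcal{N}_M>\mathcal{N}_F>1$, and $\mathbf{E}_2^*$ is a regular equilibrium when $\mathcal{N}_F>\mathcal{N}_M>1$ (with $\theta_M>1$).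
   Context: Parameters: $r\in(0,1)$, $\rho,\sigma,\mu,\delta,\nu,\eta>0$, $\gamma\ge1$. $\mathcal{N}_M:=\frac{\gamma r\rho\nu}{\mu(\delta+\eta)}$, $\mathcal{N}_F:=\frac{(1-r)\rho\nu}{\delta(\delta+\eta+\nu)}$, $\theta_M:=\frac{(1-r)\mu(\delta+\eta)}{\gamma r\delta\nu}$, $\vartheta:=(1-r)\mu+r\delta$. $\mathbf{E}_1^*=(M_1^*,A_1^*,U_1^* )$ with $M_1^*=r\frac{\delta}{\vartheta}\frac{1}{\sigma}\ln\mathcal{N}_F$, $A_1^*=(1-r)\frac{\mu}{\vartheta}\frac{\delta+\eta}{\delta+\eta+\nu}\frac1\sigma\ln\mathcal{N}_F$, $U_1^*=(1-r)\frac{\mu}{\vartheta}\frac{\nu}{\delta+\eta+\nu}\frac1\sigma\ln\mathcal{N}_F$. $\mathbf{E}_2^*=(M_2^*,A_2^*,U_2^* )$ with $M_2^*=\frac{\delta+\eta}{\gamma\nu\theta_M+\eta+\delta}\frac1\sigma\ln\mathcal{N}_M$, $A_2^*=\frac{\gamma\nu(\theta_M-1)}{\gamma\nu\theta_M+\eta+\delta}\frac1\sigma\ln\mathcal{N}_M$, $U_2^*=\frac{\gamma\nu}{\gamma\nu\theta_M+\eta+\delta}\frac1\sigma\ln\mathcal{N}_M$. The natural piecewise smooth system uses the vector field $\Phi_1$ on $\mathbb{M}_a$ and $\Phi_2$ on $\mathbb{M}_s$, where $\Phi_1=\big(r\rho Ue^{-\sigma S}-\mu M,(1-r)\rho Ue^{-\sigma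 S}-\nu A+\eta U-\delta A,\nu A-(\eta+\delta)U\big)$ and $\Phi_2=\big(r\rho Ue^{-\sigma S}-\mu M,(1-r)\rho Ue^{-\sigma S}-\nu\gamma M+\eta U-\delta A,\nu\gamma M-(\eta+\delta)U\big)$, $S=M+A+U$; a regular equilibrium is a zero of $\Phi_1$ lying in $\mathbb{M}_a$ or of $\Phi_2$ lying in $\mathbb{M}_s$. *)

theory Defs
  imports Complex_Main
begin

definition NM :: "real \<Rightarrow> real \<Rightarrow> real \<Rightarrow> real \<Rightarrow> real \<Rightarrow> real \<Rightarrow> real \<Rightarrow> real \<Rightarrow> real" where
  "NM r \<rho> \<sigma> \<mu> \<delta> \<nu> \<eta> \<gamma> = \<gamma> * r * \<rho> * \<nu> / (\<mu> * (\<delta> + \<eta>))"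

definition NF :: "real \<Rightarrow> real \<Rightarrow> real \<Rightarrow> real \<Rightarrow> real \<Rightarrow> real \<Rightarrow> real \<Rightarrow> real \<Rightarrow> real" where
  "NF r \<rho> \<sigma> \<mu> \<delta> \<nu> \<eta> \<gamma> = (1 - r) * \<rho> * \<nu> / (\<delta> * (\<delta> + \<eta> + \<nu>))"

definition thetaM :: "real \<Rightarrow> real \<Rightarrow> real \<Rightarrow> real \<Rightarrow> real \<Rightarrow> real \<Rightarrow> real \<Rightarrow> real \<Rightarrow> real" where
  "thetaM r \<rho> \<sigma> \<mu> \<delta> \<nu> \<eta> \<gamma> = (1 - r) * \<mu> * (\<delta> + \<eta>) / (\<gamma> * r * \<delta> * \<nu>)"

definition vartheta :: "real \<Rightarrow> real \<Rightarrow> real \<Rightarrow> real" where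
  "vartheta r \<mu> \<delta> = (1 - r) * \<mu> + r * \<delta>"

definition E1 :: "real \<Rightarrow> real \<Rightarrow> real \<Rightarrow> real \<Rightarrow> real \<Rightarrow> real \<Rightarrow> real \<Rightarrow> real \<Rightarrow> real \<times> real \<times> real" where
  "E1 r \<rho> \<sigma> \<mu> \<delta> \<nu> \<eta> \<gamma> =
     (let L = (1 / \<sigma>) * ln (NF r \<rho> \<sigma> \<mu> \<delta> \<nu> \<eta> \<gamma>); th = vartheta r \<mu> \<delta> in
      (r * (\<delta> / th) * L,
       (1 - r) * (\<mu> / th) * ((\<delta> + \<eta>) / (\<delta> + \<eta> + \<nu>)) * L,
       (1 - r) * (\<mu> / th) * (\<nu> / (\<delta> + \<eta> + \<nu>)) * L))"

definition E2 :: "real \<Rightarrow> real \<Rightarrow> real \<Rightarrow> real \<Rightarrow> real \<Rightarrow> real \<Rightarrow> real \<Rightarrow> real \<Rightarrow> real \<times> real \<times> real" where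
  "E2 r \<rho> \<sigma> \<mu> \<delta> \<nu> \<eta> \<gamma> =
     (let L = (1 / \<sigma>) * ln (NM r \<rho> \<sigma> \<mu> \<delta> \<nu> \<eta> \<gamma>);
          \<theta> = thetaM r \<rho> \<sigma> \<mu> \<delta> \<nu> \<eta> \<gamma>;
          D = \<gamma> * \<nu> * \<theta> + \<eta> + \<delta> in
      ((\<delta> + \<eta>) / D * L,
       \<gamma> * \<nu> * (\<theta> - 1) / D * L,
       \<gamma> * \<nu> / D * L))"

definition Rplus3 :: "(real \<times> real \<times> real) set" where
  "Rplus3 = {(M, A, U). 0 \<le> M \<and> 0 \<le> A \<and> 0 \<le> U}"

definition Ps :: "real \<Rightarrow> (real \<times> real \<times> real) set" where
  "Ps \<gamma> = {(M, A, U). (M, A, U) \<in> Rplus3 \<and> \<gamma> * M = A}"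

definition Ma :: "real \<Rightarrow> (real \<times> real \<times> real) set" where
  "Ma \<gamma> = {(M, A, U). (M, A, U) \<in> Rplus3 \<and> \<gamma> * M > A}"

definition Ms :: "real \<Rightarrow> (real \<times> real \<times> real) set" where
  "Ms \<gamma> = {(M, A, U). (M, A, U) \<in> Rplus3 \<and> \<gamma> * M < A}"

definition Phi1 :: "real \<Rightarrow> real \<Rightarrow> real \<Rightarrow> real \<Rightarrow> real \<Rightarrow> real \<Rightarrow> real \<Rightarrow> real \<Rightarrow>
    real \<times> real \<times> real \<Rightarrow> real \<times> real \<times> real" where
  "Phi1 r \<rho> \<sigma> \<mu> \<delta> \<nu> \<eta> \<gamma> x = (case x of (M, A, U) \<Rightarrow>
     (let S = M + A + U in
      (r * \<rho> * U * exp (- \<sigma> * S) - \<mu> * M,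
       (1 - r) * \<rho> * U * exp (- \<sigma> * S) - \<nu> * A + \<eta> * U - \<delta> * A,
       \<nu> * A - (\<eta> + \<delta>) * U)))"

definition Phi2 :: "real \<Rightarrow> real \<Rightarrow> real \<Rightarrow> real \<Rightarrow> real \<Rightarrow> real \<Rightarrow> real \<Rightarrow> real \<Rightarrow>
    real \<times> real \<times> real \<Rightarrow> real \<times> real \<times> real" where
  "Phi2 r \<rho> \<sigma> \<mu> \<delta> \<nu> \<eta> \<gamma> x = (case x of (M, A, U) \<Rightarrow>
     (let S = M + A + U in
      (r * \<rho> * U * exp (- \<sigma> * S) - \<mu> * M,
       (1 - r) * \<rho> * U * exp (- \<sigma> * S) - \<nu> * \<gamma> * M + \<eta> * U - \<delta> * A,
       \<nu> * \<gamma> * M - (\<eta> + \<delta>) * U)))"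

definition regular_equilibrium :: "real \<Rightarrow> real \<Rightarrow> real \<Rightarrow> real \<Rightarrow> real \<Rightarrow> real \<Rightarrow> real \<Rightarrow> real \<Rightarrow>
    real \<times> real \<times> real \<Rightarrow> bool" where
  "regular_equilibrium r \<rho> \<sigma> \<mu> \<delta> \<nu> \<eta> \<gamma> x \<longleftrightarrow>
     (Phi1 r \<rho> \<sigma> \<mu> \<delta> \<nu> \<eta> \<gamma> x = (0, 0, 0) \<and> x \<in> Ma \<gamma>) \<or>
     (Phi2 r \<rho> \<sigma> \<mu> \<delta> \<nu> \<eta> \<gamma> x = (0, 0, 0) \<and> x \<in> Ms \<gamma>)"

end

theory Submission
  imports Defs
begin

lemma aux1: "(t::real) \<noteq> 0 \<Longrightarrow> s \<noteq> 0 \<Longrightarrow> g*(r*(\<delta>/t)*L) - (1-r)*(\<mu>/t)*(e/s)*L = L/(t*s)*(g*r*\<delta>*s - (1-r)*\<mu>*e)"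
  by (simp add: field_simps)

lemma aux2: "0<(f::real) \<Longrightarrow> (0 < f*x \<longleftrightarrow> 0<x) \<and> (f*x<0 \<longleftrightarrow> x<0) \<and> (f*x=0 \<longleftrightarrow> x=0)"
  by (simp add: zero_less_mult_iff mult_less_0_iff)

lemma hM: "(e::real) \<noteq> 0 \<Longrightarrow> t \<noteq> 0 \<Longrightarrow> r*\<delta> \<noteq> 0 \<Longrightarrow> r*(\<delta>/t) = e/(e*t/(r*\<delta>))"
  by (simp add: field_simps)
lemma hU: assumes "(1-r)*\<mu>*e = \<gamma>*r*\<delta>*s" "(e::real) \<noteq> 0" "t \<noteq> 0" "s \<noteq> 0" "r*\<delta> \<noteq> 0"
  shows "(1-r)*(\<mu>/t)*(\<nu>/s) = \<gamma>*\<nu>/(e*t/(r*\<delta>))"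
proof -
  have "(1-r)*(\<mu>/t)*(\<nu>/s) = ((1-r)*\<mu>*e)*\<nu>/(t*s*e)" using assms(2-5) by (simp add: field_simps)
  also have "\<dots> = (\<gamma>*r*\<delta>*s)*\<nu>/(t*s*e)" using assms(1) by simp
  also have "\<dots> = \<gamma>*\<nu>/(e*t/(r*\<delta>))" using assms(2-5) by (simp add: field_simps)
  finally show ?thesis .
qed
lemma hA: assumes "(1-r)*\<mu>*e = \<gamma>*r*\<delta>*s" "s = e + \<nu>" "(e::real) \<noteq> 0" "t \<noteq> 0" "s \<noteq> 0" "r*\<delta> \<noteq> 0" "\<gamma>*\<nu> \<noteq> 0"
  shows "(1-r)*(\<mu>/t)*(e/s) = \<gamma>*\<nu>*(((1-r)*\<mu>*e/(\<gamma>*r*\<delta>*\<nu>)) - 1)/(e*t/(r*\<delta>))"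
proof -
  have "\<gamma>*\<nu>*(((1-r)*\<mu>*e/(\<gamma>*r*\<delta>*\<nu>)) - 1) = \<gamma>*\<nu>*((\<gamma>*r*\<delta>*s/(\<gamma>*r*\<delta>*\<nu>)) - 1)" using assms(1) by simp
  also have "\<dots> = \<gamma>*\<nu>*(s/\<nu> - 1)" using assms(3-7) by simp
  also have "\<dots> = \<gamma>*e" using assms by (simp add: field_simps)
  finally have 1: "\<gamma>*\<nu>*(((1-r)*\<mu>*e/(\<gamma>*r*\<delta>*\<nu>)) - 1) = \<gamma>*e" .
  have "(1-r)*(\<mu>/t)*(e/s) = ((1-r)*\<mu>*e)*e/(t*s*e)" using assms(3-7) by (simp add: field_simps)
  also have "\<dots> = (\<gamma>*r*\<delta>*s)*e/(t*s*e)" using assms(1) by simp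
  also have "\<dots> = \<gamma>*e/(e*t/(r*\<delta>))" using assms(3-7) by (simp add: field_simps)
  finally show ?thesis unfolding 1 .
qed

lemma p1: fixes r \<rho> \<mu> \<delta> \<nu> \<eta> L t s :: real
  assumes "0<r" "r<1" "0<\<rho>" "0<\<mu>" "0<\<delta>" "0<\<nu>" "0<\<eta>" "t \<noteq> 0" "s > 0" and hs: "s = \<delta>+\<eta>+\<nu>"
  shows "r*\<rho>*((1-r)*(\<mu>/t)*(\<nu>/s)*L)*(1/((1-r)*\<rho>*\<nu>/(\<delta>*s))) - \<mu>*(r*(\<delta>/t)*L) = 0"
    "(1-r)*\<rho>*((1-r)*(\<mu>/t)*(\<nu>/s)*L)*(1/((1-r)*\<rho>*\<nu>/(\<delta>*s))) - \<nu>*((1-r)*(\<mu>/t)*((\<delta>+\<eta>)/s)*L) + \<eta>*((1-r)*(\<mu>/t)*(\<nu>/s)*L) - \<delta>*((1-r)*(\<mu>/t)*((\<delta>+\<eta>)/s)*L) = 0"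
    "\<nu>*((1-r)*(\<mu>/t)*((\<delta>+\<eta>)/s)*L) - (\<eta>+\<delta>)*((1-r)*(\<mu>/t)*(\<nu>/s)*L) = 0"
proof -
  note a = assms(1-9)
  define U where "U = (1-r)*(\<mu>/t)*(\<nu>/s)*L"
  define A where "A = (1-r)*(\<mu>/t)*((\<delta>+\<eta>)/s)*L"
  define N where "N = (1-r)*\<rho>*\<nu>/(\<delta>*s)"
  have r1: "1-r \<noteq> 0" using a by simp
  have N0: "N \<noteq> 0" unfolding N_def using a r1 by simp
  have UN: "U*(1/N) = \<mu>*\<delta>*L/(t*\<rho>)" unfolding U_def N_def using r1 a by (simp add: field_simps)
  show "r*\<rho>*((1-r)*(\<mu>/t)*(\<nu>/s)*L)*(1/((1-r)*\<rho>*\<nu>/(\<delta>*s))) - \<mu>*(r*(\<delta>/t)*L) = 0"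
    using UN unfolding U_def N_def using a
    by (simp add: field_simps) 
  have AU: "A = (\<delta>+\<eta>)/\<nu>*U" unfolding A_def U_def using a by (simp add: field_simps)
  show "\<nu>*((1-r)*(\<mu>/t)*((\<delta>+\<eta>)/s)*L) - (\<eta>+\<delta>)*((1-r)*(\<mu>/t)*(\<nu>/s)*L) = 0"
    using AU unfolding A_def U_def using a by (simp add: field_simps)
  have "(1-r)*\<rho>*U*(1/N) - \<nu>*A + \<eta>*U - \<delta>*A = (1-r)*\<rho>*(U*(1/N)) - U*\<delta>*s/\<nu>"
    unfolding AU hs using a N0 by (simp add: field_simps)
  also have "\<dots> = 0" unfolding UN unfolding U_def using a r1 by (simp add: field_simps)
  finally show "(1-r)*\<rho>*((1-r)*(\<mu>/t)*(\<nu>/s)*L)*(1/((1-r)*\<rho>*\<nu>/(\<delta>*s))) - \<nu>*((1-r)*(\<mu>/t)*((\<delta>+\<eta>)/s)*L) + \<eta>*((1-r)*(\<mu>/t)*(\<nu>/s)*L) - \<delta>*((1-r)*(\<mu>/t)*((\<delta>+\<eta>)/s)*L) = 0"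
    unfolding U_def A_def N_def .
qed
lemma p1S0: fixes q p r \<delta> \<mu> t L :: real assumes "q + p = 1" "t \<noteq> 0"
  shows "r*(\<delta>/t)*L + (1-r)*(\<mu>/t)*q*L + (1-r)*(\<mu>/t)*p*L = (r*\<delta> + (1-r)*\<mu>)/t*L"
proof -
  have p: "p = 1 - q" using assms(1) by simp
  show ?thesis unfolding p using assms(2) by (simp add: field_simps)
qed
lemma p1S: fixes r \<mu> \<delta> \<nu> e L t s :: real
  assumes "s \<noteq> 0" "s = e + \<nu>" "t = (1-r)*\<mu> + r*\<delta>" "t \<noteq> 0"
  shows "r*(\<delta>/t)*L + (1-r)*(\<mu>/t)*(e/s)*L + (1-r)*(\<mu>/t)*(\<nu>/s)*L = L"
proof -
  have "e/s + \<nu>/s = (e+\<nu>)/s" by (simp add: add_divide_distrib)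
  then have "e/s + \<nu>/s = 1" using assms(1,2) by simp
  then have "r*(\<delta>/t)*L + (1-r)*(\<mu>/t)*(e/s)*L + (1-r)*(\<mu>/t)*(\<nu>/s)*L = (r*\<delta> + (1-r)*\<mu>)/t*L"
    using assms(4) by (rule p1S0)
  also have "\<dots> = L" using assms(3,4) by (simp add: add.commute)
  finally show ?thesis .
qed

lemma p2: fixes r \<rho> \<mu> \<delta> \<nu> \<eta> \<gamma> L D \<theta> :: real
  assumes "0<r" "0<\<rho>" "0<\<mu>" "0<\<delta>" "0<\<nu>" "0<\<eta>" "0<\<gamma>" "D \<noteq> 0"
   and ht: "\<theta> = (1-r)*\<mu>*(\<delta>+\<eta>)/(\<gamma>*r*\<delta>*\<nu>)"
  shows "r*\<rho>*(\<gamma>*\<nu>/D*L)*(1/(\<gamma>*r*\<rho>*\<nu>/(\<mu>*(\<delta>+\<eta>)))) - \<mu>*((\<delta>+\<eta>)/D*L) = 0"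
    "(1-r)*\<rho>*(\<gamma>*\<nu>/D*L)*(1/(\<gamma>*r*\<rho>*\<nu>/(\<mu>*(\<delta>+\<eta>)))) - \<nu>*\<gamma>*((\<delta>+\<eta>)/D*L) + \<eta>*(\<gamma>*\<nu>/D*L) - \<delta>*(\<gamma>*\<nu>*(\<theta>-1)/D*L) = 0"
    "\<nu>*\<gamma>*((\<delta>+\<eta>)/D*L) - (\<eta>+\<delta>)*(\<gamma>*\<nu>/D*L) = 0"
proof -
  note a = assms(1-8)
  have e0: "\<delta>+\<eta> > 0" using a by simp
  have UN: "(\<gamma>*\<nu>/D*L)*(1/(\<gamma>*r*\<rho>*\<nu>/(\<mu>*(\<delta>+\<eta>)))) = \<mu>*(\<delta>+\<eta>)*L/(r*\<rho>*D)"
    using a e0 by (simp add: field_simps)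
  show "r*\<rho>*(\<gamma>*\<nu>/D*L)*(1/(\<gamma>*r*\<rho>*\<nu>/(\<mu>*(\<delta>+\<eta>)))) - \<mu>*((\<delta>+\<eta>)/D*L) = 0"
    using UN a by (simp add: field_simps)
  show "\<nu>*\<gamma>*((\<delta>+\<eta>)/D*L) - (\<eta>+\<delta>)*(\<gamma>*\<nu>/D*L) = 0" by (simp add: algebra_simps)
  have dt: "\<delta>*\<gamma>*\<nu>*\<theta> = (1-r)*\<mu>*(\<delta>+\<eta>)/r" unfolding ht using a by (simp add: field_simps)
  have "(1-r)*\<rho>*(\<gamma>*\<nu>/D*L)*(1/(\<gamma>*r*\<rho>*\<nu>/(\<mu>*(\<delta>+\<eta>)))) - \<nu>*\<gamma>*((\<delta>+\<eta>)/D*L) + \<eta>*(\<gamma>*\<nu>/D*L) - \<delta>*(\<gamma>*\<nu>*(\<theta>-1)/D*L)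
     = L/D * ((1-r)*\<mu>*(\<delta>+\<eta>)/r - \<delta>*\<gamma>*\<nu>*\<theta>)"
    unfolding mult.assoc[of "(1-r)" \<rho>] UN using a by (simp add: field_simps)
  also have "\<dots> = 0" unfolding dt by simp
  finally show "(1-r)*\<rho>*(\<gamma>*\<nu>/D*L)*(1/(\<gamma>*r*\<rho>*\<nu>/(\<mu>*(\<delta>+\<eta>)))) - \<nu>*\<gamma>*((\<delta>+\<eta>)/D*L) + \<eta>*(\<gamma>*\<nu>/D*L) - \<delta>*(\<gamma>*\<nu>*(\<theta>-1)/D*L) = 0" .
qed
lemma p2S: fixes \<delta> \<eta> \<gamma> \<nu> \<theta> D L :: real assumes "D = \<gamma>*\<nu>*\<theta> + \<eta> + \<delta>" "D \<noteq> 0"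
  shows "(\<delta>+\<eta>)/D*L + \<gamma>*\<nu>*(\<theta>-1)/D*L + \<gamma>*\<nu>/D*L = L"
proof -
  have "(\<delta>+\<eta>)/D*L + \<gamma>*\<nu>*(\<theta>-1)/D*L + \<gamma>*\<nu>/D*L = ((\<delta>+\<eta>) + \<gamma>*\<nu>*(\<theta>-1) + \<gamma>*\<nu>)/D*L"
    by (simp add: add_divide_distrib distrib_right)
  also have "(\<delta>+\<eta>) + \<gamma>*\<nu>*(\<theta>-1) + \<gamma>*\<nu> = D" unfolding assms(1) by (simp add: algebra_simps)
  finally show ?thesis using assms(2) by simp
qed

theorem mainTheorem6:
  fixes r \<rho> \<sigma> \<mu> \<delta> \<nu> \<eta> \<gamma> :: real
  assumes "0 < r" "r < 1" "0 < \<rho>" "0 < \<sigma>" "0 < \<mu>" "0 < \<delta>" "0 < \<nu>" "0 < \<eta>" "1 \<le> \<gamma>"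
  defines "nM \<equiv> NM r \<rho> \<sigma> \<mu> \<delta> \<nu> \<eta> \<gamma>"
      and "nF \<equiv> NF r \<rho> \<sigma> \<mu> \<delta> \<nu> \<eta> \<gamma>"
      and "\<theta> \<equiv> thetaM r \<rho> \<sigma> \<mu> \<delta> \<nu> \<eta> \<gamma>"
      and "e1 \<equiv> E1 r \<rho> \<sigma> \<mu> \<delta> \<nu> \<eta> \<gamma>"
      and "e2 \<equiv> E2 r \<rho> \<sigma> \<mu> \<delta> \<nu> \<eta> \<gamma>"
  shows "(nF > 1 \<longrightarrow>
            (e1 \<in> Ps \<gamma> \<longleftrightarrow> nM = nF) \<and>
            (e1 \<in> Ma \<gamma> \<longleftrightarrow> nM > nF) \<and>
            (e1 \<in> Ms \<gamma> \<longleftrightarrow> nM < nF))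
       \<and> (nM > 1 \<and> \<theta> > 1 \<longrightarrow>
            (e2 \<in> Ps \<gamma> \<longleftrightarrow> nM = nF) \<and>
            (e2 \<in> Ms \<gamma> \<longleftrightarrow> nF > nM) \<and>
            (e2 \<in> Ma \<gamma> \<longleftrightarrow> nM > nF))
       \<and> (nM = nF \<and> nF > 1 \<longrightarrow> e1 = e2 \<and> e1 \<in> Ps \<gamma>)
       \<and> (nM > nF \<and> nF > 1 \<longrightarrow> regular_equilibrium r \<rho> \<sigma> \<mu> \<delta> \<nu> \<eta> \<gamma> e1)
       \<and> (nF > nM \<and> nM > 1 \<and> \<theta> > 1 \<longrightarrow> regular_equilibrium r \<rho> \<sigma> \<mu> \<delta> \<nu> \<eta> \<gamma> e2)"
proof -
  note pos = assms(1-9)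
  have g0: "\<gamma> > 0" using pos by linarith
  define c where "c = (1-r)*\<mu>*(\<delta>+\<eta>)"
  define d where "d = \<gamma>*r*\<delta>*(\<delta>+\<eta>+\<nu>)"
  define th where "th = vartheta r \<mu> \<delta>"
  have c0: "c > 0" using pos unfolding c_def by simp
  have d0: "d > 0" using pos g0 unfolding d_def by simp
  have th0: "th > 0" using pos unfolding th_def vartheta_def
    by (metis add_pos_pos diff_gt_0_iff_gt mult_pos_pos)
  have ex1: "\<delta>+\<eta>+\<nu>>0" "\<delta>+\<eta>>0" "\<delta>*(\<delta>+\<eta>+\<nu>)>0" "\<mu>*(\<delta>+\<eta>)>0" "\<delta>+\<eta>+\<nu>\<noteq>0" "\<delta>+\<eta>\<noteq>0" "th \<noteq> 0"
    using pos th0 by auto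
  have ex2: "th*(\<delta>+\<eta>+\<nu>) > 0" "r*\<delta> > 0" "\<gamma>*r*\<delta>*\<nu> > 0" using ex1 th0 pos g0 by auto
  note pos = pos ex1 th0 ex2
  have nF0: "nF > 0" using pos unfolding nF_def NF_def by simp
  have nM0: "nM > 0" using pos g0 unfolding nM_def NM_def by simp
  have key: "nM * c = nF * d" using pos g0 unfolding nM_def nF_def NM_def NF_def c_def d_def
  proof -
    have "\<mu>*(\<delta>+\<eta>) \<noteq> 0" "\<delta>*(\<delta>+\<eta>+\<nu>) \<noteq> 0" using pos by auto
    then show "\<gamma> * r * \<rho> * \<nu> / (\<mu> * (\<delta> + \<eta>)) * ((1 - r) * \<mu> * (\<delta> + \<eta>)) =
    (1 - r) * \<rho> * \<nu> / (\<delta> * (\<delta> + \<eta> + \<nu>)) * (\<gamma> * r * \<delta> * (\<delta> + \<eta> + \<nu>))"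
      by (simp add: field_simps)
  qed
  have gt: "nM > nF \<longleftrightarrow> d > c"
  proof
    assume "nM > nF" then have "nF * d > nF * c" using key c0 by (metis mult_strict_right_mono)
    then show "d > c" using nF0 by simp
  next
    assume "d > c" then have "nF * d > nF * c" using nF0 by simp
    then show "nM > nF" using key c0 by (metis mult_less_cancel_right_pos)
  qed
  have eq: "nM = nF \<longleftrightarrow> d = c"
  proof
    assume "nM = nF" then show "d = c" using key nF0 by simp
  next
    assume "d = c" then show "nM = nF" using key c0 by simp
  qed
  have lt: "nM < nF \<longleftrightarrow> d < c" using gt eq by linarith
  define L1 where "L1 = (1/\<sigma>) * ln nF"
  define L2 where "L2 = (1/\<sigma>) * ln nM"
  define D where "D = \<gamma> * \<nu> * \<theta> + \<eta> + \<delta>"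
  have e1v: "e1 = (r * (\<delta> / th) * L1,
       (1 - r) * (\<mu> / th) * ((\<delta> + \<eta>) / (\<delta> + \<eta> + \<nu>)) * L1,
       (1 - r) * (\<mu> / th) * (\<nu> / (\<delta> + \<eta> + \<nu>)) * L1)"
    unfolding e1_def E1_def L1_def th_def nF_def by (simp add: Let_def)
  have e2v: "e2 = ((\<delta> + \<eta>) / D * L2, \<gamma> * \<nu> * (\<theta> - 1) / D * L2, \<gamma> * \<nu> / D * L2)"
    unfolding e2_def E2_def L2_def D_def \<theta>_def nM_def by (simp add: Let_def)
  have thv: "\<theta> = c / (\<gamma>*r*\<delta>*\<nu>)" unfolding \<theta>_def thetaM_def c_def by simp
  have D_eq: "D = (\<delta>+\<eta>) * th / (r*\<delta>)"
    using pos g0 unfolding D_def thv c_def th_def vartheta_def by (simp add: field_simps)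
  have D0: "D > 0" using D_eq pos th0 by simp
  note pos = pos D0 g0
  have diff1: "\<gamma> * (r * (\<delta> / th) * L1) - (1 - r) * (\<mu> / th) * ((\<delta> + \<eta>) / (\<delta> + \<eta> + \<nu>)) * L1
      = L1 / (th * (\<delta>+\<eta>+\<nu>)) * (d - c)"
    unfolding c_def d_def by (rule aux1) (use pos in auto)
  have diff2: "\<gamma> * ((\<delta> + \<eta>) / D * L2) - \<gamma> * \<nu> * (\<theta> - 1) / D * L2
      = L2 / (D * r * \<delta>) * (d - c)"
    using pos g0 D0 unfolding thv c_def d_def by (simp add: field_simps)

  have memPs: "\<And>M A U. (M,A,U) \<in> Ps \<gamma> \<longleftrightarrow> 0\<le>M \<and> 0\<le>A \<and> 0\<le>U \<and> \<gamma>*M = A"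
    unfolding Ps_def Rplus3_def by auto
  have memMa: "\<And>M A U. (M,A,U) \<in> Ma \<gamma> \<longleftrightarrow> 0\<le>M \<and> 0\<le>A \<and> 0\<le>U \<and> \<gamma>*M - A > 0"
    unfolding Ma_def Rplus3_def by auto
  have memMs: "\<And>M A U. (M,A,U) \<in> Ms \<gamma> \<longleftrightarrow> 0\<le>M \<and> 0\<le>A \<and> 0\<le>U \<and> \<gamma>*M - A < 0"
    unfolding Ms_def Rplus3_def by auto
  have P1: "(nF > 1 \<longrightarrow>
            (e1 \<in> Ps \<gamma> \<longleftrightarrow> nM = nF) \<and>
            (e1 \<in> Ma \<gamma> \<longleftrightarrow> nM > nF) \<and>
            (e1 \<in> Ms \<gamma> \<longleftrightarrow> nM < nF))"
  proof
    assume h: "nF > 1"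
    have L0: "L1 > 0" unfolding L1_def using h pos by simp
    have f: "L1 / (th * (\<delta>+\<eta>+\<nu>)) > 0" using L0 th0 pos by simp
    have nn: "0 \<le> r * (\<delta> / th) * L1 \<and> 0 \<le> (1 - r) * (\<mu> / th) * ((\<delta> + \<eta>) / (\<delta> + \<eta> + \<nu>)) * L1
       \<and> 0 \<le> (1 - r) * (\<mu> / th) * (\<nu> / (\<delta> + \<eta> + \<nu>)) * L1"
      using pos th0 L0 by simp
    have s1: "\<gamma> * (r * (\<delta> / th) * L1) - (1 - r) * (\<mu> / th) * ((\<delta> + \<eta>) / (\<delta> + \<eta> + \<nu>)) * L1 > 0 \<longleftrightarrow> d > c"
      unfolding diff1 using aux2[OF f, of "d-c"] by linarith
    have s2: "\<gamma> * (r * (\<delta> / th) * L1) - (1 - r) * (\<mu> / th) * ((\<delta> + \<eta>) / (\<delta> + \<eta> + \<nu>)) * L1 < 0 \<longleftrightarrow> d < c"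
      unfolding diff1 using aux2[OF f, of "d-c"] by linarith
    have s3: "\<gamma> * (r * (\<delta> / th) * L1) = (1 - r) * (\<mu> / th) * ((\<delta> + \<eta>) / (\<delta> + \<eta> + \<nu>)) * L1 \<longleftrightarrow> d = c"
      using diff1 aux2[OF f, of "d-c"] by (smt (verit))
    show "(e1 \<in> Ps \<gamma> \<longleftrightarrow> nM = nF) \<and> (e1 \<in> Ma \<gamma> \<longleftrightarrow> nM > nF) \<and> (e1 \<in> Ms \<gamma> \<longleftrightarrow> nM < nF)"
      unfolding e1v memPs memMa memMs using nn s1 s2 s3 gt lt eq by blast
  qed
  have P2: "(nM > 1 \<and> \<theta> > 1 \<longrightarrow>
            (e2 \<in> Ps \<gamma> \<longleftrightarrow> nM = nF) \<and>
            (e2 \<in> Ms \<gamma> \<longleftrightarrow> nF > nM) \<and>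
            (e2 \<in> Ma \<gamma> \<longleftrightarrow> nM > nF))"
  proof
    assume h: "nM > 1 \<and> \<theta> > 1"
    have L0: "L2 > 0" unfolding L2_def using h pos by simp
    have f: "L2 / (D * r * \<delta>) > 0" using L0 D0 pos by simp
    have nn: "0 \<le> (\<delta> + \<eta>) / D * L2 \<and> 0 \<le> \<gamma> * \<nu> * (\<theta> - 1) / D * L2 \<and> 0 \<le> \<gamma> * \<nu> / D * L2"
      using pos g0 D0 L0 h by simp
    have s1: "\<gamma> * ((\<delta> + \<eta>) / D * L2) - \<gamma> * \<nu> * (\<theta> - 1) / D * L2 > 0 \<longleftrightarrow> d > c"
      unfolding diff2 using aux2[OF f, of "d-c"] by linarith
    have s2: "\<gamma> * ((\<delta> + \<eta>) / D * L2) - \<gamma> * \<nu> * (\<theta> - 1) / D * L2 < 0 \<longleftrightarrow> d < c"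
      unfolding diff2 using aux2[OF f, of "d-c"] by linarith
    have s3: "\<gamma> * ((\<delta> + \<eta>) / D * L2) = \<gamma> * \<nu> * (\<theta> - 1) / D * L2 \<longleftrightarrow> d = c"
      using diff2 aux2[OF f, of "d-c"] by (smt (verit))
    show "(e2 \<in> Ps \<gamma> \<longleftrightarrow> nM = nF) \<and> (e2 \<in> Ms \<gamma> \<longleftrightarrow> nF > nM) \<and> (e2 \<in> Ma \<gamma> \<longleftrightarrow> nM > nF)"
      unfolding e2v memPs memMa memMs using nn s1 s2 s3 gt lt eq by blast
  qed
  have P3: "nM = nF \<and> nF > 1 \<longrightarrow> e1 = e2 \<and> e1 \<in> Ps \<gamma>"
  proof
    assume h: "nM = nF \<and> nF > 1"
    have dc: "d = c" using h eq by simp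
    have LL: "L1 = L2" unfolding L1_def L2_def using h by simp
    have cc: "(1-r)*\<mu>*(\<delta>+\<eta>) = \<gamma>*r*\<delta>*(\<delta>+\<eta>+\<nu>)" using dc unfolding c_def d_def by simp
    have nz: "\<delta>+\<eta> \<noteq> 0" "th \<noteq> 0" "\<delta>+\<eta>+\<nu> \<noteq> 0" "r*\<delta> \<noteq> 0" "\<gamma>*\<nu> \<noteq> 0" using pos by auto
    have cM: "r * (\<delta> / th) = (\<delta> + \<eta>) / D" unfolding D_eq by (rule hM) (use nz in auto)
    have cU: "(1 - r) * (\<mu> / th) * (\<nu> / (\<delta> + \<eta> + \<nu>)) = \<gamma> * \<nu> / D"
      unfolding D_eq by (rule hU[OF cc]) (use nz in auto)
    have cA: "(1 - r) * (\<mu> / th) * ((\<delta> + \<eta>) / (\<delta> + \<eta> + \<nu>)) = \<gamma> * \<nu> * (\<theta> - 1) / D"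
      unfolding D_eq thv c_def by (rule hA[OF cc]) (use nz in auto)
    have "e1 = e2" unfolding e1v e2v LL using cM cU cA by simp
    then show "e1 = e2 \<and> e1 \<in> Ps \<gamma>" using P1 h by simp
  qed
  have P4: "nM > nF \<and> nF > 1 \<longrightarrow> regular_equilibrium r \<rho> \<sigma> \<mu> \<delta> \<nu> \<eta> \<gamma> e1"
  proof
    assume h: "nM > nF \<and> nF > 1"
    have Ma1: "e1 \<in> Ma \<gamma>" using P1 h by simp
    have S: "r * (\<delta> / th) * L1 + (1 - r) * (\<mu> / th) * ((\<delta> + \<eta>) / (\<delta> + \<eta> + \<nu>)) * L1
       + (1 - r) * (\<mu> / th) * (\<nu> / (\<delta> + \<eta> + \<nu>)) * L1 = L1"
      by (rule p1S) (use pos in \<open>auto simp: th_def vartheta_def\<close>)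
    have ex: "exp (- \<sigma> * L1) = 1 / nF" unfolding L1_def using pos h
      by (simp add: exp_minus inverse_eq_divide)
    have nFv: "nF = (1 - r) * \<rho> * \<nu> / (\<delta> * (\<delta> + \<eta> + \<nu>))" unfolding nF_def NF_def by simp
    have pp: "r*\<rho>*((1-r)*(\<mu>/th)*(\<nu>/(\<delta>+\<eta>+\<nu>))*L1)*(1/((1-r)*\<rho>*\<nu>/(\<delta>*(\<delta>+\<eta>+\<nu>)))) - \<mu>*(r*(\<delta>/th)*L1) = 0"
    "(1-r)*\<rho>*((1-r)*(\<mu>/th)*(\<nu>/(\<delta>+\<eta>+\<nu>))*L1)*(1/((1-r)*\<rho>*\<nu>/(\<delta>*(\<delta>+\<eta>+\<nu>)))) - \<nu>*((1-r)*(\<mu>/th)*((\<delta>+\<eta>)/(\<delta>+\<eta>+\<nu>))*L1) + \<eta>*((1-r)*(\<mu>/th)*(\<nu>/(\<delta>+\<eta>+\<nu>))*L1) - \<delta>*((1-r)*(\<mu>/th)*((\<delta>+\<eta>)/(\<delta>+\<eta>+\<nu>))*L1) = 0"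
    "\<nu>*((1-r)*(\<mu>/th)*((\<delta>+\<eta>)/(\<delta>+\<eta>+\<nu>))*L1) - (\<eta>+\<delta>)*((1-r)*(\<mu>/th)*(\<nu>/(\<delta>+\<eta>+\<nu>))*L1) = 0"
      by (rule p1; use pos in auto)+
    have "Phi1 r \<rho> \<sigma> \<mu> \<delta> \<nu> \<eta> \<gamma> e1 = (0,0,0)"
      unfolding e1v Phi1_def Let_def prod.case S ex nFv using pp by simp
    then show "regular_equilibrium r \<rho> \<sigma> \<mu> \<delta> \<nu> \<eta> \<gamma> e1"
      unfolding regular_equilibrium_def using Ma1 by simp
  qed
  have P5: "nF > nM \<and> nM > 1 \<and> \<theta> > 1 \<longrightarrow> regular_equilibrium r \<rho> \<sigma> \<mu> \<delta> \<nu> \<eta> \<gamma> e2"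
  proof
    assume h: "nF > nM \<and> nM > 1 \<and> \<theta> > 1"
    have Ms2: "e2 \<in> Ms \<gamma>" using P2 h by simp
    have S: "(\<delta> + \<eta>) / D * L2 + \<gamma> * \<nu> * (\<theta> - 1) / D * L2 + \<gamma> * \<nu> / D * L2 = L2"
      by (rule p2S) (use D0 in \<open>auto simp: D_def\<close>)
    have ex: "exp (- \<sigma> * L2) = 1 / nM" unfolding L2_def using pos h
      by (simp add: exp_minus inverse_eq_divide)
    have nMv: "nM = \<gamma> * r * \<rho> * \<nu> / (\<mu> * (\<delta> + \<eta>))" unfolding nM_def NM_def by simp
    have tv: "\<theta> = (1-r)*\<mu>*(\<delta>+\<eta>)/(\<gamma>*r*\<delta>*\<nu>)" using thv c_def by simp
    have pp: "r*\<rho>*(\<gamma>*\<nu>/D*L2)*(1/(\<gamma>*r*\<rho>*\<nu>/(\<mu>*(\<delta>+\<eta>)))) - \<mu>*((\<delta>+\<eta>)/D*L2) = 0"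
    "(1-r)*\<rho>*(\<gamma>*\<nu>/D*L2)*(1/(\<gamma>*r*\<rho>*\<nu>/(\<mu>*(\<delta>+\<eta>)))) - \<nu>*\<gamma>*((\<delta>+\<eta>)/D*L2) + \<eta>*(\<gamma>*\<nu>/D*L2) - \<delta>*(\<gamma>*\<nu>*(\<theta>-1)/D*L2) = 0"
    "\<nu>*\<gamma>*((\<delta>+\<eta>)/D*L2) - (\<eta>+\<delta>)*(\<gamma>*\<nu>/D*L2) = 0"
      by (rule p2; use pos tv in auto)+
    have "Phi2 r \<rho> \<sigma> \<mu> \<delta> \<nu> \<eta> \<gamma> e2 = (0,0,0)"
      unfolding e2v Phi2_def Let_def prod.case S ex nMv using pp by simp
    then show "regular_equilibrium r \<rho> \<sigma> \<mu> \<delta> \<nu> \<eta> \<gamma> e2"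
      unfolding regular_equilibrium_def using Ms2 by simp
  qed
  show ?thesis using P1 P2 P3 P4 P5 by blast
qed

end
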